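(* Let $(Y,\overline X,x)$ be a point for (BM$_{\mathbf n}$). Suppose either (i) it is 1-critical with a multiplier $\lambda$ (as in the definition of 1-criticality) satisfying $S_j(\lambda)\in\mathbb{S}^{n_j}_+$ for all $j\in[k]$, or (ii) it is 2-critical and $Y_j$ is column rank deficient (i.e. $\operatorname{rank}Y_j<p_j$) for every $j\in[k]$. Then $(Y,\overline X,x)$ is a global minimizer of (BM$_{\mathbf n}$).
   Context: Let $\mathbb{S}^{r}$ denote real symmetric $r\times r$ matrices, $\mathbb{S}^r_+$ the PSD cone, $A\bullet B=\operatorname{trace}(A^TB)$. Let $\mathbf n=(n_1,\dots,n_\ell)$, $d\ge 0$, $1\le k\le \ell$, $\mathbb{S}^{\mathbf n}=\mathbb{S}^{n_1}\times\cdots\times\mathbb{S}^{n_\ell}$, $\mathbb{S}^{\mathbf n}_+=\mathbb{S}^{n_1}_+\times\cdots\times\mathbb{S}^{n_\ell}_+$, with the inner product $\langle\cdot,\cdot\rangle$ on $\mathbb{S}^{\mathbf n}\times\mathbb{R}^d$ being the sum of trace inner products and the dot product. Let $C\in\mathbb{S}^{\mathbf n}\times\mathbb{R}^d$, $b\in\mathbb{R}^m$, and $\mathcal{A}:\mathbb{S}^{\mathbf n}\times\mathbb{R}^d\to\mathbb{R}^m$ linear, written $\mathcal{A}(X_1,\dots,X_\ell,x)=\sum_j\mathcal{A}_j(X_j)+\mathcal{A}_0(x)$ with $\mathcal{A}_j(X_j)=(A_{i,j}\bullet X_j)_{i\in[m]}$, $A_{i,j}\in\mathbb{S}^{n_j}$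 (this formula also defines $\mathcal{A}_j$ on nonsymmetric matrices); $\mathcal{A}^*$ is its adjoint. Let $\mathscr{X}=\{X=(X_1,\dots,X_\ell,x)\in\mathbb{S}^{\mathbf n}_+\times\mathbb{R}^d:\mathcal{A}(X)=b\}$, assumed nonempty, with $\min_{X\in\mathscr{X}}\langle C,X\rangle$ attained. For positive integers $p_1,\dots,p_k$, let $Y=(Y_1,\dots,Y_k)$, $Y_j\in\mathbb{R}^{n_j\times p_j}$, $q(Y)=(Y_1Y_1^T,\dots,Y_kY_k^T)$, $\overline X=(X_{k+1},\dots,X_\ell)$. Problem (BM$_{\mathbf n}$) is $\min_{Y,\overline X,x}\langle C,(q(Y),\overline X,x)\rangle$ subject to $(q(Y),\overline X,x)\in\mathscr{X}$. For $\lambda\in\mathbb{R}^m$ let $S(\lambda)=C-\mathcal{A}^*(\lambda)$ with components $S_j(\lambda)\in\mathbb{S}^{n_j}$ and $s(\lambda)\in\mathbb{R}^d$. A point $(Y,\overline X,x)$ is 1-critical with multiplier $\lambda\in\mathbb{R}^m$ if $(q(Y),\overline X,x)\in\mathscr{X}$, $S_j(\lambda)\in\mathbb{S}^{n_j}_+$ for $j>k$, $\sum_{j>k}S_j(\lambda)\bullet X_j=0$, $s(\lambda)=0$, and $S_j(\lambda)Y_j=0$ for $j\in[k]$; it is 2-critical if moreover, for each $j\in[k]$, $S_j(\lambda)\bullet U_jU_j^T\ge0$ for all $U_j\in\mathbb{R}^{n_j\times p_j}$ with $\mathcal{A}_j(U_jY_j^T)=0$. *)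

theory Defs
  imports "Jordan_Normal_Form.DL_Rank"
begin

text \<open>Blocks are indexed by j in {0..<l} (paper: 1..l); the first k blocks (j < k) are
the factorized ones.
Problem data: sizes n :: nat => nat, matrices A i j (n j x n j, symmetric),
vectors a0 i of dimension d with A_0(x)_i = a0 i . x, cost blocks Cm j and c, rhs b.\<close>

definition mat_trace :: "real mat \<Rightarrow> real" where
  "mat_trace M = (\<Sum>i<dim_row M. M $$ (i, i))"

definition frob :: "real mat \<Rightarrow> real mat \<Rightarrow> real" (infixl "\<bullet>\<^sub>F" 70) where
  "frob M N = mat_trace (transpose_mat M * N)"

definition sym_mat :: "nat \<Rightarrow> real mat \<Rightarrow> bool" where
  "sym_mat r M \<longleftrightarrow> M \<in> carrier_mat r r \<and> transpose_mat M = M"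

definition psd_mat :: "nat \<Rightarrow> real mat \<Rightarrow> bool" where
  "psd_mat r M \<longleftrightarrow> sym_mat r M \<and> (\<forall>v \<in> carrier_vec r. v \<bullet> (M *\<^sub>v v) \<ge> 0)"

definition sdp_data ::
  "nat \<Rightarrow> (nat \<Rightarrow> nat) \<Rightarrow> nat \<Rightarrow> nat \<Rightarrow> (nat \<Rightarrow> nat \<Rightarrow> real mat) \<Rightarrow> (nat \<Rightarrow> real vec)
   \<Rightarrow> (nat \<Rightarrow> real mat) \<Rightarrow> real vec \<Rightarrow> real vec \<Rightarrow> bool" where
  "sdp_data l n d m A a0 Cm c b \<longleftrightarrow>
     (\<forall>i<m. \<forall>j<l. sym_mat (n j) (A i j)) \<and> (\<forall>i<m. a0 i \<in> carrier_vec d) \<and>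
     (\<forall>j<l. sym_mat (n j) (Cm j)) \<and> c \<in> carrier_vec d \<and> b \<in> carrier_vec m"

definition opA ::
  "nat \<Rightarrow> (nat \<Rightarrow> nat \<Rightarrow> real mat) \<Rightarrow> (nat \<Rightarrow> real vec) \<Rightarrow> (nat \<Rightarrow> real mat) \<Rightarrow> real vec \<Rightarrow> nat \<Rightarrow> real" where
  "opA l A a0 X x i = (\<Sum>j<l. A i j \<bullet>\<^sub>F X j) + a0 i \<bullet> x"

definition feasible ::
  "nat \<Rightarrow> (nat \<Rightarrow> nat) \<Rightarrow> nat \<Rightarrow> nat \<Rightarrow> (nat \<Rightarrow> nat \<Rightarrow> real mat) \<Rightarrow> (nat \<Rightarrow> real vec)
   \<Rightarrow> real vec \<Rightarrow> (nat \<Rightarrow> real mat) \<Rightarrow> real vec \<Rightarrow> bool" where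
  "feasible l n d m A a0 b X x \<longleftrightarrow>
     (\<forall>j<l. psd_mat (n j) (X j)) \<and> x \<in> carrier_vec d \<and>
     (\<forall>i<m. opA l A a0 X x i = b $ i)"

definition objective ::
  "nat \<Rightarrow> (nat \<Rightarrow> real mat) \<Rightarrow> real vec \<Rightarrow> (nat \<Rightarrow> real mat) \<Rightarrow> real vec \<Rightarrow> real" where
  "objective l Cm c X x = (\<Sum>j<l. Cm j \<bullet>\<^sub>F X j) + c \<bullet> x"

definition liftBM :: "nat \<Rightarrow> (nat \<Rightarrow> real mat) \<Rightarrow> (nat \<Rightarrow> real mat) \<Rightarrow> nat \<Rightarrow> real mat" where
  "liftBM k Y Xb j = (if j < k then Y j * transpose_mat (Y j) else Xb j)"

definition feasibleBM ::
  "nat \<Rightarrow> (nat \<Rightarrow> nat) \<Rightarrow> nat \<Rightarrow> nat \<Rightarrow> nat \<Rightarrow> (nat \<Rightarrow> nat) \<Rightarrow> (nat \<Rightarrow> nat \<Rightarrow> real mat)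
   \<Rightarrow> (nat \<Rightarrow> real vec) \<Rightarrow> real vec
   \<Rightarrow> (nat \<Rightarrow> real mat) \<Rightarrow> (nat \<Rightarrow> real mat) \<Rightarrow> real vec \<Rightarrow> bool" where
  "feasibleBM l n d m k p A a0 b Y Xb x \<longleftrightarrow>
     (\<forall>j<k. Y j \<in> carrier_mat (n j) (p j)) \<and>
     feasible l n d m A a0 b (liftBM k Y Xb) x"

definition global_min_BM ::
  "nat \<Rightarrow> (nat \<Rightarrow> nat) \<Rightarrow> nat \<Rightarrow> nat \<Rightarrow> nat \<Rightarrow> (nat \<Rightarrow> nat) \<Rightarrow> (nat \<Rightarrow> nat \<Rightarrow> real mat)
   \<Rightarrow> (nat \<Rightarrow> real vec) \<Rightarrow> (nat \<Rightarrow> real mat) \<Rightarrow> real vec \<Rightarrow> real vec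
   \<Rightarrow> (nat \<Rightarrow> real mat) \<Rightarrow> (nat \<Rightarrow> real mat) \<Rightarrow> real vec \<Rightarrow> bool" where
  "global_min_BM l n d m k p A a0 Cm c b Y Xb x \<longleftrightarrow>
     feasibleBM l n d m k p A a0 b Y Xb x \<and>
     (\<forall>Y' Xb' x'. feasibleBM l n d m k p A a0 b Y' Xb' x' \<longrightarrow>
        objective l Cm c (liftBM k Y Xb) x \<le> objective l Cm c (liftBM k Y' Xb') x')"

definition slackS :: "(nat \<Rightarrow> nat) \<Rightarrow> nat \<Rightarrow> (nat \<Rightarrow> nat \<Rightarrow> real mat) \<Rightarrow> (nat \<Rightarrow> real mat) \<Rightarrow> real vec \<Rightarrow> nat \<Rightarrow> real mat" where
  "slackS n m A Cm lam j = mat (n j) (n j) (\<lambda>(r, s). Cm j $$ (r, s) - (\<Sum>i<m. lam $ i * A i j $$ (r, s)))"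

definition slack_s :: "nat \<Rightarrow> nat \<Rightarrow> (nat \<Rightarrow> real vec) \<Rightarrow> real vec \<Rightarrow> real vec \<Rightarrow> real vec" where
  "slack_s d m a0 c lam = vec d (\<lambda>r. c $ r - (\<Sum>i<m. lam $ i * a0 i $ r))"

definition crit1 ::
  "nat \<Rightarrow> (nat \<Rightarrow> nat) \<Rightarrow> nat \<Rightarrow> nat \<Rightarrow> nat \<Rightarrow> (nat \<Rightarrow> nat) \<Rightarrow> (nat \<Rightarrow> nat \<Rightarrow> real mat)
   \<Rightarrow> (nat \<Rightarrow> real vec) \<Rightarrow> (nat \<Rightarrow> real mat) \<Rightarrow> real vec \<Rightarrow> real vec
   \<Rightarrow> (nat \<Rightarrow> real mat) \<Rightarrow> (nat \<Rightarrow> real mat) \<Rightarrow> real vec \<Rightarrow> real vec \<Rightarrow> bool" where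
  "crit1 l n d m k p A a0 Cm c b Y Xb x lam \<longleftrightarrow>
     lam \<in> carrier_vec m \<and>
     feasibleBM l n d m k p A a0 b Y Xb x \<and>
     (\<forall>j\<in>{k..<l}. psd_mat (n j) (slackS n m A Cm lam j)) \<and>
     (\<Sum>j\<in>{k..<l}. slackS n m A Cm lam j \<bullet>\<^sub>F Xb j) = 0 \<and>
     slack_s d m a0 c lam = 0\<^sub>v d \<and>
     (\<forall>j<k. slackS n m A Cm lam j * Y j = 0\<^sub>m (n j) (p j))"

definition crit2 ::
  "nat \<Rightarrow> (nat \<Rightarrow> nat) \<Rightarrow> nat \<Rightarrow> nat \<Rightarrow> nat \<Rightarrow> (nat \<Rightarrow> nat) \<Rightarrow> (nat \<Rightarrow> nat \<Rightarrow> real mat)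
   \<Rightarrow> (nat \<Rightarrow> real vec) \<Rightarrow> (nat \<Rightarrow> real mat) \<Rightarrow> real vec \<Rightarrow> real vec
   \<Rightarrow> (nat \<Rightarrow> real mat) \<Rightarrow> (nat \<Rightarrow> real mat) \<Rightarrow> real vec \<Rightarrow> real vec \<Rightarrow> bool" where
  "crit2 l n d m k p A a0 Cm c b Y Xb x lam \<longleftrightarrow>
     crit1 l n d m k p A a0 Cm c b Y Xb x lam \<and>
     (\<forall>j<k. \<forall>U \<in> carrier_mat (n j) (p j).
        (\<forall>i<m. A i j \<bullet>\<^sub>F (U * transpose_mat (Y j)) = 0) \<longrightarrow>
        slackS n m A Cm lam j \<bullet>\<^sub>F (U * transpose_mat U) \<ge> 0)"

end

theory Submission
  imports Defs
begin

definition QF :: "nat \<Rightarrow> (nat \<Rightarrow> nat \<Rightarrow> real) \<Rightarrow> (nat \<Rightarrow> real) \<Rightarrow> real" where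
  "QF n M w = (\<Sum>r<n. \<Sum>s<n. w r * M r s * w s)"

definition BF :: "nat \<Rightarrow> (nat \<Rightarrow> nat \<Rightarrow> real) \<Rightarrow> (nat \<Rightarrow> real) \<Rightarrow> (nat \<Rightarrow> real) \<Rightarrow> real" where
  "BF n M u v = (\<Sum>r<n. \<Sum>s<n. u r * M r s * v s)"

lemma QF_comb:
  assumes sym: "\<forall>r<n. \<forall>s<n. M r s = M s r"
  shows "QF n M (\<lambda>i. t * u i + v i) = t^2 * QF n M u + 2 * t * BF n M u v + QF n M v"
proof -
  have "BF n M v u = BF n M u v"
    unfolding BF_def
    apply (subst sum.swap)
    apply (rule sum.cong, simp, rule sum.cong, simp)
    using sym by (simp add: mult_ac)
  moreover have "QF n M (\<lambda>i. t * u i + v i) = t^2 * QF n M u + t * BF n M u v + t * BF n M v u + QF n M v"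
  proof -
    have e: "\<And>r s. (t * u r + v r) * M r s * (t * u s + v s) =
       t^2 * (u r * M r s * u s) + t * (u r * M r s * v s) + t * (v r * M r s * u s) + v r * M r s * v s"
      by (simp add: algebra_simps power2_eq_square)
    show ?thesis
      unfolding QF_def BF_def e sum.distrib sum_distrib_left[symmetric] ..
  qed
  ultimately show ?thesis by simp
qed

definition ev :: "nat \<Rightarrow> nat \<Rightarrow> real" where "ev a i = (if i = a then 1 else 0)"

lemma BF_ev: "a < n \<Longrightarrow> BF n M (ev a) v = (\<Sum>s<n. M a s * v s)"
proof -
  assume a: "a < n"
  have "BF n M (ev a) v = (\<Sum>r<n. if r = a then (\<Sum>s<n. M a s * v s) else 0)"
    unfolding BF_def ev_def by (intro sum.cong) auto
  also have "\<dots> = (\<Sum>s<n. M a s * v s)" using a by simp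
  finally show ?thesis .
qed

lemma BF_ev2: "a < n \<Longrightarrow> b < n \<Longrightarrow> BF n M (ev a) (ev b) = M a b"
proof -
  assume a: "a < n" and b: "b < n"
  have "BF n M (ev a) (ev b) = (\<Sum>s<n. M a s * ev b s)" using BF_ev[OF a] .
  also have "\<dots> = (\<Sum>s<n. if s = b then M a b else 0)"
    unfolding ev_def by (intro sum.cong) auto
  also have "\<dots> = M a b" using b by simp
  finally show ?thesis .
qed

lemma QF_ev: "a < n \<Longrightarrow> QF n M (ev a) = M a a"
  using BF_ev2[of a n a M] unfolding QF_def BF_def by simp

lemma psd_diag_zero:
  assumes sym: "\<forall>r<n. \<forall>s<n. M r s = M s r" and psd: "\<forall>w. QF n M w \<ge> 0"
    and a: "a < n" "M a a = 0" and b: "b < n"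
  shows "M a b = 0"
proof (rule ccontr)
  assume ne: "M a b \<noteq> 0"
  define t where "t = - (M b b + 1) / (2 * M a b)"
  have "0 \<le> QF n M (\<lambda>i. t * ev a i + ev b i)" using psd by blast
  also have "\<dots> = 2 * t * M a b + M b b"
    using QF_comb[OF sym] QF_ev[OF a(1)] QF_ev[OF b] BF_ev2[OF a(1) b] a(2) by simp
  also have "\<dots> = -1" using ne unfolding t_def by (simp add: field_simps)
  finally show False by simp
qed

lemma core:
  assumes symS: "\<forall>r<n. \<forall>s<n. S r s = S s r" and psdS: "\<forall>w. QF n S w \<ge> 0"
  shows "(\<forall>r<n. \<forall>s<n. X r s = X s r) \<Longrightarrow> (\<forall>w. QF n X w \<ge> 0) \<Longrightarrow>
     (\<Sum>r<n. \<Sum>s<n. S r s * X r s) \<ge> 0"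
proof (induction "card {i. i < n \<and> X i i \<noteq> 0}" arbitrary: X rule: less_induct)
  case (less X)
  note symX = less.prems(1) and psdX = less.prems(2)
  show ?case
  proof (cases "\<exists>i<n. X i i \<noteq> 0")
    case False
    then have "\<forall>r<n. \<forall>s<n. X r s = 0" using psd_diag_zero[OF symX psdX] by blast
    then show ?thesis by simp
  next
    case True
    then obtain i0 where i0: "i0 < n" "X i0 i0 \<noteq> 0" by blast
    define a where "a = X i0 i0"
    have "a \<ge> 0" using psdX QF_ev[OF i0(1), of X] unfolding a_def by metis
    with i0 have apos: "a > 0" unfolding a_def by simp
    define u where "u r = X r i0" for r
    define X' where "X' r s = X r s - u r * u s / a" for r s
    have symX': "\<forall>r<n. \<forall>s<n. X' r s = X' s r" using symX unfolding X'_def by (simp add: mult_ac)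
    have psdX': "\<forall>w. QF n X' w \<ge> 0"
    proof
      fix w
      define \<beta> where "\<beta> = (\<Sum>s<n. u s * w s)"
      have "QF n X' w = QF n X w - \<beta> * \<beta> / a"
      proof -
        have e: "\<And>r s. w r * (X r s - u r * u s / a) * w s = w r * X r s * w s - (1/a) * ((u r * w r) * (u s * w s))"
          by (simp add: algebra_simps)
        have "QF n X' w = QF n X w - (1/a) * (\<Sum>r<n. \<Sum>s<n. (u r * w r) * (u s * w s))"
          unfolding QF_def X'_def e sum_subtractf sum_distrib_left[symmetric] ..
        also have "(\<Sum>r<n. \<Sum>s<n. (u r * w r) * (u s * w s)) = \<beta> * \<beta>"
          unfolding \<beta>_def sum_product by (simp add: mult_ac)
        finally show ?thesis by simp
      qed
      moreover have "BF n X (ev i0) w = \<beta>"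
        unfolding BF_ev[OF i0(1)] \<beta>_def u_def using symX i0(1) by (intro sum.cong) auto
      moreover have "0 \<le> QF n X (\<lambda>i. (-\<beta>/a) * ev i0 i + w i)" using psdX by blast
      moreover have "QF n X (\<lambda>i. (-\<beta>/a) * ev i0 i + w i) = (-\<beta>/a)^2 * a + 2 * (-\<beta>/a) * \<beta> + QF n X w"
        using QF_comb[OF symX, of "-\<beta>/a" "ev i0" w] QF_ev[OF i0(1), of X] \<open>BF n X (ev i0) w = \<beta>\<close>
        unfolding a_def by simp
      moreover have "(-\<beta>/a)^2 * a + 2 * (-\<beta>/a) * \<beta> = - \<beta> * \<beta> / a"
        using apos by (simp add: power2_eq_square field_simps)
      ultimately show "QF n X' w \<ge> 0" by linarith
    qed
    have sub: "{i. i < n \<and> X' i i \<noteq> 0} \<subseteq> {i. i < n \<and> X i i \<noteq> 0} - {i0}"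
    proof
      fix i assume i: "i \<in> {i. i < n \<and> X' i i \<noteq> 0}"
      have "i \<noteq> i0" using i apos unfolding X'_def u_def a_def by auto
      moreover have "X i i \<noteq> 0"
      proof
        assume "X i i = 0"
        then have "X i i0 = 0" using psd_diag_zero[OF symX psdX, of i i0] i i0 by auto
        then show False using i \<open>X i i = 0\<close> unfolding X'_def u_def by simp
      qed
      ultimately show "i \<in> {i. i < n \<and> X i i \<noteq> 0} - {i0}" using i by auto
    qed
    have "card {i. i < n \<and> X' i i \<noteq> 0} < card {i. i < n \<and> X i i \<noteq> 0}"
    proof (rule le_less_trans[OF card_mono[OF _ sub]])
      show "finite ({i. i < n \<and> X i i \<noteq> 0} - {i0})" by simp
      show "card ({i. i < n \<and> X i i \<noteq> 0} - {i0}) < card {i. i < n \<and> X i i \<noteq> 0}"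
        by (rule card_Diff1_less) (use i0 in auto)
    qed
    then have ih: "(\<Sum>r<n. \<Sum>s<n. S r s * X' r s) \<ge> 0" using less.hyps symX' psdX' by blast
    have "(\<Sum>r<n. \<Sum>s<n. S r s * X r s) = (\<Sum>r<n. \<Sum>s<n. S r s * X' r s) + QF n S u / a"
    proof -
      have e: "\<And>r s. S r s * X r s = S r s * X' r s + (1/a) * (u r * S r s * u s)"
        unfolding X'_def using apos by (simp add: algebra_simps)
      show ?thesis
        unfolding e sum.distrib sum_distrib_left[symmetric] QF_def by simp
    qed
    moreover have "QF n S u / a \<ge> 0" using psdS apos by simp
    ultimately show ?thesis using ih by linarith
  qed
qed

lemma frob_sum:
  assumes "M \<in> carrier_mat r c" "N \<in> carrier_mat r c"
  shows "M \<bullet>\<^sub>F N = (\<Sum>i<c. \<Sum>k<r. M $$ (k, i) * N $$ (k, i))"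
proof -
  have "M \<bullet>\<^sub>F N = (\<Sum>i<c. (transpose_mat M * N) $$ (i, i))"
    using assms unfolding frob_def mat_trace_def by simp
  also have "\<dots> = (\<Sum>i<c. \<Sum>k<r. M $$ (k, i) * N $$ (k, i))"
  proof (rule sum.cong[OF refl])
    fix i assume i: "i \<in> {..<c}"
    show "(transpose_mat M * N) $$ (i, i) = (\<Sum>k<r. M $$ (k, i) * N $$ (k, i))"
    proof -
      have "(transpose_mat M * N) $$ (i, i) = row (transpose_mat M) i \<bullet> col N i"
        using assms i by (intro index_mult_mat) auto
      also have "\<dots> = (\<Sum>k\<in>{0..<r}. row (transpose_mat M) i $ k * col N i $ k)"
        unfolding scalar_prod_def using assms by simp
      also have "\<dots> = (\<Sum>k<r. M $$ (k, i) * N $$ (k, i))"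
        unfolding atLeast0LessThan using assms i by (intro sum.cong refl) simp
      finally show ?thesis .
    qed
  qed
  finally show ?thesis .
qed

lemma psd_QF:
  assumes "psd_mat n M"
  shows "\<forall>w. QF n (\<lambda>r s. M $$ (r, s)) w \<ge> 0" "\<forall>r<n. \<forall>s<n. M $$ (r, s) = M $$ (s, r)"
proof -
  have M: "M \<in> carrier_mat n n" "transpose_mat M = M" using assms unfolding psd_mat_def sym_mat_def by auto
  show "\<forall>r<n. \<forall>s<n. M $$ (r, s) = M $$ (s, r)"
    using M by (metis carrier_matD index_transpose_mat(1))
  show "\<forall>w. QF n (\<lambda>r s. M $$ (r, s)) w \<ge> 0"
  proof
    fix w
    have "vec n w \<bullet> (M *\<^sub>v vec n w) \<ge> 0" using assms unfolding psd_mat_def by auto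
    also have "vec n w \<bullet> (M *\<^sub>v vec n w) = QF n (\<lambda>r s. M $$ (r, s)) w"
      using M unfolding QF_def by (simp add: scalar_prod_def sum_distrib_left mult_ac atLeast0LessThan)
    finally show "QF n (\<lambda>r s. M $$ (r, s)) w \<ge> 0" .
  qed
qed

lemma frob_psd:
  assumes "psd_mat n S" "psd_mat n X"
  shows "S \<bullet>\<^sub>F X \<ge> 0"
proof -
  have c: "S \<in> carrier_mat n n" "X \<in> carrier_mat n n" using assms unfolding psd_mat_def sym_mat_def by auto
  have "0 \<le> (\<Sum>r<n. \<Sum>s<n. S $$ (r, s) * X $$ (r, s))"
    using core[OF psd_QF(2)[OF assms(1)] psd_QF(1)[OF assms(1)] psd_QF(2)[OF assms(2)] psd_QF(1)[OF assms(2)]] .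
  also have "\<dots> = S \<bullet>\<^sub>F X"
    unfolding frob_sum[OF c] using sum.swap[of "\<lambda>r s. S $$ (r, s) * X $$ (r, s)" "{..<n}" "{..<n}"] by simp
  finally show ?thesis .
qed

lemma kernel_vec:
  fixes Y :: "real mat"
  assumes Y: "Y \<in> carrier_mat n p" and rk: "vec_space.rank n Y < p"
  obtains z where "z \<in> carrier_vec p" "z \<noteq> 0\<^sub>v p" "Y *\<^sub>v z = 0\<^sub>v n"
proof (cases "distinct (cols Y)")
  case True
  have "\<not> module.lin_indpt class_ring (module_vec TYPE(real) n) (set (cols Y))"
    using vec_space.lin_indpt_full_rank[OF Y True] rk by auto
  then show ?thesis using vec_space.lin_depE[OF Y _ True] that by blast
next
  case False
  then obtain i j where ij: "i < length (cols Y)" "j < length (cols Y)" "i \<noteq> j" "cols Y ! i = cols Y ! j"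
    by (auto simp: distinct_conv_nth)
  then have ij': "i < p" "j < p" "col Y i = col Y j" using Y by auto
  define z :: "real vec" where "z = unit_vec p i - unit_vec p j"
  have "z \<in> carrier_vec p" unfolding z_def by simp
  moreover have "z \<noteq> 0\<^sub>v p"
  proof
    assume "z = 0\<^sub>v p"
    then have "z $ i = 0" using ij' by simp
    moreover have "z $ i = 1" unfolding z_def using ij ij' by simp
    ultimately show False by simp
  qed
  moreover have "Y *\<^sub>v z = 0\<^sub>v n"
  proof (rule eq_vecI)
    show "dim_vec (Y *\<^sub>v z) = dim_vec (0\<^sub>v n)" using Y by simp
    fix r assume "r < dim_vec (0\<^sub>v n)"
    then have r: "r < n" by simp
    have "Y $$ (r, i) = Y $$ (r, j)" 
    proof -
      have "Y $$ (r, i) = col Y i $ r" "Y $$ (r, j) = col Y j $ r"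
        by (rule index_col[symmetric], use Y r ij' in auto)+
      then show ?thesis using ij'(3) by metis
    qed
    then show "(Y *\<^sub>v z) $ r = 0\<^sub>v n $ r"
      using r Y ij' unfolding z_def
      by (simp add: scalar_prod_minus_distrib[of _ p] )
  qed
  ultimately show ?thesis using that by blast
qed

lemma sum_swap3:
  "(\<Sum>a<N. \<Sum>k<N. \<Sum>i<m. g i a k) = (\<Sum>i<m. \<Sum>a<N. \<Sum>k<N. (g i a k :: real))"
proof -
  have "(\<Sum>a<N. \<Sum>k<N. \<Sum>i<m. g i a k) = (\<Sum>a<N. \<Sum>i<m. \<Sum>k<N. g i a k)"
    by (rule sum.cong[OF refl], rule sum.swap)
  also have "\<dots> = (\<Sum>i<m. \<Sum>a<N. \<Sum>k<N. g i a k)" by (rule sum.swap)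
  finally show ?thesis .
qed

lemma slack_carrier: "slackS n m A Cm lam j \<in> carrier_mat (n j) (n j)"
  unfolding slackS_def by simp

lemma slack_index: "r < n j \<Longrightarrow> s < n j \<Longrightarrow>
  slackS n m A Cm lam j $$ (r, s) = Cm j $$ (r, s) - (\<Sum>i<m. lam $ i * A i j $$ (r, s))"
  unfolding slackS_def by simp

lemma sym_entry: "sym_mat N M \<Longrightarrow> r < N \<Longrightarrow> s < N \<Longrightarrow> M $$ (r, s) = M $$ (s, r)"
  unfolding sym_mat_def by (metis carrier_matD index_transpose_mat(1))

lemma slack_sym:
  assumes data: "sdp_data l n d m A a0 Cm c b" and j: "j < l"
  shows "sym_mat (n j) (slackS n m A Cm lam j)"
  unfolding sym_mat_def
proof (intro conjI slack_carrier eq_matI)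
  fix r s assume r: "r < dim_row (slackS n m A Cm lam j)" and s: "s < dim_col (slackS n m A Cm lam j)"
  then have r': "r < n j" and s': "s < n j" using slack_carrier[of n m A Cm lam j] by auto
  have C: "sym_mat (n j) (Cm j)" and Ai: "\<And>i. i < m \<Longrightarrow> sym_mat (n j) (A i j)"
    using data j unfolding sdp_data_def by auto
  have "transpose_mat (slackS n m A Cm lam j) $$ (r, s) = slackS n m A Cm lam j $$ (s, r)"
    using r' s' by (simp add: slackS_def)
  also have "\<dots> = Cm j $$ (s, r) - (\<Sum>i<m. lam $ i * A i j $$ (s, r))"
    using slack_index[of s n j r m A Cm lam, OF s' r'] .
  also have "\<dots> = Cm j $$ (r, s) - (\<Sum>i<m. lam $ i * A i j $$ (r, s))"
    using sym_entry[OF C s' r'] sym_entry[OF Ai s' r'] by simp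
  also have "\<dots> = slackS n m A Cm lam j $$ (r, s)" using slack_index[of r n j s m A Cm lam, OF r' s'] by simp
  finally show "transpose_mat (slackS n m A Cm lam j) $$ (r, s) = slackS n m A Cm lam j $$ (r, s)" .
qed (auto simp: slackS_def)

lemma frob_split:
  assumes data: "sdp_data l n d m A a0 Cm c b" and j: "j < l" and X: "X \<in> carrier_mat (n j) (n j)"
  shows "Cm j \<bullet>\<^sub>F X = slackS n m A Cm lam j \<bullet>\<^sub>F X + (\<Sum>i<m. lam $ i * (A i j \<bullet>\<^sub>F X))"
proof -
  have C: "Cm j \<in> carrier_mat (n j) (n j)" and Ai: "\<And>i. i < m \<Longrightarrow> A i j \<in> carrier_mat (n j) (n j)"
    using data j unfolding sdp_data_def sym_mat_def by auto
  have "slackS n m A Cm lam j \<bullet>\<^sub>F X = (\<Sum>a<n j. \<Sum>k<n j. slackS n m A Cm lam j $$ (k, a) * X $$ (k, a))"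
    by (rule frob_sum[OF slack_carrier[of n m A Cm lam j] X])
  also have "\<dots> = (\<Sum>a<n j. \<Sum>k<n j. Cm j $$ (k, a) * X $$ (k, a) - (\<Sum>i<m. lam $ i * (A i j $$ (k, a) * X $$ (k, a))))"
    by (intro sum.cong refl) (simp add: slack_index sum_distrib_left right_diff_distrib mult_ac)
  also have "\<dots> = Cm j \<bullet>\<^sub>F X - (\<Sum>a<n j. \<Sum>k<n j. \<Sum>i<m. lam $ i * (A i j $$ (k, a) * X $$ (k, a)))"
    unfolding frob_sum[OF C X] sum_subtractf ..
  also have "(\<Sum>a<n j. \<Sum>k<n j. \<Sum>i<m. lam $ i * (A i j $$ (k, a) * X $$ (k, a)))
     = (\<Sum>i<m. \<Sum>a<n j. \<Sum>k<n j. lam $ i * (A i j $$ (k, a) * X $$ (k, a)))"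
    by (rule sum_swap3)
  also have "\<dots> = (\<Sum>i<m. lam $ i * (A i j \<bullet>\<^sub>F X))"
    by (intro sum.cong refl) (simp add: frob_sum[OF Ai X] sum_distrib_left)
  finally show ?thesis by simp
qed

lemma obj_eq:
  assumes data: "sdp_data l n d m A a0 Cm c b" and lam: "lam \<in> carrier_vec m"
    and s0: "slack_s d m a0 c lam = 0\<^sub>v d" and feas: "feasible l n d m A a0 b X x"
  shows "objective l Cm c X x = (\<Sum>j<l. slackS n m A Cm lam j \<bullet>\<^sub>F X j) + lam \<bullet> b"
proof -
  have Xc: "\<And>j. j < l \<Longrightarrow> X j \<in> carrier_mat (n j) (n j)"
    using feas unfolding feasible_def psd_mat_def sym_mat_def by auto
  have x: "x \<in> carrier_vec d" and cons: "\<And>i. i < m \<Longrightarrow> opA l A a0 X x i = b $ i"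
    using feas unfolding feasible_def by auto
  have bc: "b \<in> carrier_vec m" and cc: "c \<in> carrier_vec d" using data unfolding sdp_data_def by auto
  have a0c: "\<And>i. i < m \<Longrightarrow> a0 i \<in> carrier_vec d" using data unfolding sdp_data_def by auto
  have "(\<Sum>j<l. Cm j \<bullet>\<^sub>F X j) = (\<Sum>j<l. slackS n m A Cm lam j \<bullet>\<^sub>F X j) + (\<Sum>j<l. \<Sum>i<m. lam $ i * (A i j \<bullet>\<^sub>F X j))"
    unfolding sum.distrib[symmetric] by (intro sum.cong refl) (rule frob_split[OF data _ Xc]; simp)
  also have "(\<Sum>j<l. \<Sum>i<m. lam $ i * (A i j \<bullet>\<^sub>F X j)) = (\<Sum>i<m. lam $ i * (\<Sum>j<l. A i j \<bullet>\<^sub>F X j))"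
    unfolding sum_distrib_left by (rule sum.swap)
  finally have e1: "(\<Sum>j<l. Cm j \<bullet>\<^sub>F X j) = (\<Sum>j<l. slackS n m A Cm lam j \<bullet>\<^sub>F X j) + (\<Sum>i<m. lam $ i * (\<Sum>j<l. A i j \<bullet>\<^sub>F X j))" .
  have cr: "\<And>r. r < d \<Longrightarrow> c $ r = (\<Sum>i<m. lam $ i * a0 i $ r)"
  proof -
    fix r assume r: "r < d"
    have "slack_s d m a0 c lam $ r = 0" using s0 r by simp
    then show "c $ r = (\<Sum>i<m. lam $ i * a0 i $ r)" using r unfolding slack_s_def by simp
  qed
  have "c \<bullet> x = (\<Sum>r<d. c $ r * x $ r)" using x unfolding scalar_prod_def by (simp add: atLeast0LessThan)
  also have "\<dots> = (\<Sum>r<d. \<Sum>i<m. lam $ i * (a0 i $ r * x $ r))"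
    by (intro sum.cong refl) (simp add: cr sum_distrib_left mult_ac)
  also have "\<dots> = (\<Sum>i<m. \<Sum>r<d. lam $ i * (a0 i $ r * x $ r))" by (rule sum.swap)
  also have "\<dots> = (\<Sum>i<m. lam $ i * (a0 i \<bullet> x))"
    using x unfolding scalar_prod_def by (simp add: atLeast0LessThan sum_distrib_left)
  finally have e2: "c \<bullet> x = (\<Sum>i<m. lam $ i * (a0 i \<bullet> x))" .
  have "(\<Sum>i<m. lam $ i * (\<Sum>j<l. A i j \<bullet>\<^sub>F X j)) + (\<Sum>i<m. lam $ i * (a0 i \<bullet> x))
      = (\<Sum>i<m. lam $ i * opA l A a0 X x i)"
    unfolding opA_def sum.distrib[symmetric] by (simp add: algebra_simps)
  also have "\<dots> = (\<Sum>i<m. lam $ i * b $ i)" using cons by simp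
  also have "\<dots> = lam \<bullet> b" using bc unfolding scalar_prod_def by (simp add: atLeast0LessThan)
  finally have e3: "(\<Sum>i<m. lam $ i * (\<Sum>j<l. A i j \<bullet>\<^sub>F X j)) + (\<Sum>i<m. lam $ i * (a0 i \<bullet> x)) = lam \<bullet> b" .
  show ?thesis unfolding objective_def e1 e2 using e3 by simp
qed

lemma trace_zero: "mat_trace (0\<^sub>m N N) = 0"
  unfolding mat_trace_def by simp

lemma frob_zero: assumes "M \<in> carrier_mat N N" shows "M \<bullet>\<^sub>F 0\<^sub>m N N = 0"
proof -
  have "transpose_mat M * 0\<^sub>m N N = 0\<^sub>m N N"
    by (rule right_mult_zero_mat) (use assms in simp)
  then show ?thesis unfolding frob_def by (simp add: trace_zero)
qed

lemma frob_SYY: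
  assumes S: "S \<in> carrier_mat N N" "transpose_mat S = S" and Y: "Y \<in> carrier_mat N P"
    and SY: "S * Y = 0\<^sub>m N P"
  shows "S \<bullet>\<^sub>F (Y * transpose_mat Y) = 0"
proof -
  have YT: "transpose_mat Y \<in> carrier_mat P N" using Y by simp
  have "transpose_mat S * (Y * transpose_mat Y) = (S * Y) * transpose_mat Y"
    unfolding S(2) by (rule assoc_mult_mat[symmetric, OF S(1) Y YT])
  also have "\<dots> = 0\<^sub>m N N" unfolding SY by (rule left_mult_zero_mat[OF YT])
  finally show ?thesis unfolding frob_def by (simp add: trace_zero)
qed

lemma mult_entry:
  assumes A: "A \<in> carrier_mat a b" and B: "B \<in> carrier_mat b c" and r: "r < a" and t: "t < c"
  shows "(A * B) $$ (r, t) = (\<Sum>s<b. A $$ (r, s) * B $$ (s, t))"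
proof -
  have "(A * B) $$ (r, t) = row A r \<bullet> col B t"
    using A B r t by (intro index_mult_mat) auto
  also have "\<dots> = (\<Sum>s\<in>{0..<b}. row A r $ s * col B t $ s)"
    unfolding scalar_prod_def using B by simp
  also have "\<dots> = (\<Sum>s<b. A $$ (r, s) * B $$ (s, t))"
    unfolding atLeast0LessThan using A B r t by (intro sum.cong refl) simp
  finally show ?thesis .
qed

lemma mv_entry:
  assumes A: "A \<in> carrier_mat a b" and z: "z \<in> carrier_vec b" and t: "t < a"
  shows "(A *\<^sub>v z) $ t = (\<Sum>s<b. A $$ (t, s) * z $ s)"
proof -
  have "(A *\<^sub>v z) $ t = row A t \<bullet> z" using A t by simp
  also have "\<dots> = (\<Sum>s\<in>{0..<b}. row A t $ s * z $ s)"
    unfolding scalar_prod_def using z by simp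
  also have "\<dots> = (\<Sum>s<b. A $$ (t, s) * z $ s)"
    unfolding atLeast0LessThan using A t by (intro sum.cong refl) simp
  finally show ?thesis .
qed

lemma vv_entry:
  assumes v: "v \<in> carrier_vec b" and w: "w \<in> carrier_vec b"
  shows "v \<bullet> w = (\<Sum>s<b. v $ s * w $ s)"
  unfolding scalar_prod_def atLeast0LessThan[symmetric] using w by simp

lemma case2_psd:
  fixes S Y :: "real mat"
  assumes S: "sym_mat N S" and Y: "Y \<in> carrier_mat N P" and rk: "vec_space.rank N Y < P"
    and Ai: "\<forall>i<m. Ai i \<in> carrier_mat N N"
    and hyp: "\<forall>U \<in> carrier_mat N P. (\<forall>i<m. Ai i \<bullet>\<^sub>F (U * transpose_mat Y) = 0) \<longrightarrow>
                 S \<bullet>\<^sub>F (U * transpose_mat U) \<ge> 0"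
  shows "psd_mat N S"
  unfolding psd_mat_def
proof (intro conjI S ballI)
  fix v :: "real vec" assume v: "v \<in> carrier_vec N"
  obtain z where z: "z \<in> carrier_vec P" "z \<noteq> 0\<^sub>v P" "Y *\<^sub>v z = 0\<^sub>v N"
    using kernel_vec[OF Y rk] by blast
  have Sc: "S \<in> carrier_mat N N" using S unfolding sym_mat_def by auto
  define U where "U = mat N P (\<lambda>(r, s). v $ r * z $ s)"
  have Uc: "U \<in> carrier_mat N P" unfolding U_def by simp
  have Ue: "U $$ (r, s) = v $ r * z $ s" if "r < N" "s < P" for r s
    unfolding U_def using that by simp
  have YT: "transpose_mat Y \<in> carrier_mat P N" using Y by simp
  have UT: "transpose_mat U \<in> carrier_mat P N" using Uc by simp
  have Yz: "(\<Sum>s<P. Y $$ (t, s) * z $ s) = 0" if t: "t < N" for t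
  proof -
    have "(Y *\<^sub>v z) $ t = 0" using z(3) t by simp
    then show ?thesis using mv_entry[OF Y z(1) t] by simp
  qed
  have UY: "U * transpose_mat Y = 0\<^sub>m N N"
  proof (rule eq_matI)
    fix r t assume r: "r < dim_row (0\<^sub>m N N)" and t: "t < dim_col (0\<^sub>m N N)"
    then have r': "r < N" and t': "t < N" by auto
    have "(U * transpose_mat Y) $$ (r, t) = (\<Sum>s<P. U $$ (r, s) * transpose_mat Y $$ (s, t))"
      by (rule mult_entry[OF Uc YT r' t'])
    also have "\<dots> = (\<Sum>s<P. v $ r * (Y $$ (t, s) * z $ s))"
      using Y t' by (intro sum.cong refl) (simp add: Ue r')
    also have "\<dots> = v $ r * (\<Sum>s<P. Y $$ (t, s) * z $ s)"
      by (simp add: sum_distrib_left)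
    also have "\<dots> = 0" using Yz[OF t'] by simp
    finally show "(U * transpose_mat Y) $$ (r, t) = 0\<^sub>m N N $$ (r, t)" using r' t' by simp
  next
    show "dim_row (U * transpose_mat Y) = dim_row (0\<^sub>m N N)" using Uc by simp
    show "dim_col (U * transpose_mat Y) = dim_col (0\<^sub>m N N)" using YT by simp
  qed
  have "\<forall>i<m. Ai i \<bullet>\<^sub>F (U * transpose_mat Y) = 0" unfolding UY using Ai frob_zero by blast
  then have ge: "S \<bullet>\<^sub>F (U * transpose_mat U) \<ge> 0" using hyp Uc by blast
  define zz where "zz = (\<Sum>s<P. z $ s * z $ s)"
  have UU: "(U * transpose_mat U) $$ (k, a) = v $ k * v $ a * zz" if k: "k < N" and a: "a < N" for k a
  proof -
    have "(U * transpose_mat U) $$ (k, a) = (\<Sum>s<P. U $$ (k, s) * transpose_mat U $$ (s, a))"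
      by (rule mult_entry[OF Uc UT k a])
    also have "\<dots> = (\<Sum>s<P. (v $ k * v $ a) * (z $ s * z $ s))"
      using Uc by (intro sum.cong refl) (simp add: Ue k a)
    also have "\<dots> = v $ k * v $ a * zz" unfolding zz_def by (simp add: sum_distrib_left)
    finally show ?thesis .
  qed
  have UUc: "U * transpose_mat U \<in> carrier_mat N N" using Uc UT by simp
  have "S \<bullet>\<^sub>F (U * transpose_mat U) = (\<Sum>a<N. \<Sum>k<N. S $$ (k, a) * (v $ k * v $ a * zz))"
    unfolding frob_sum[OF Sc UUc] by (intro sum.cong refl) (simp add: UU)
  also have "\<dots> = (\<Sum>a<N. \<Sum>k<N. zz * (v $ k * (S $$ (k, a) * v $ a)))"
    by (intro sum.cong refl) (simp add: mult_ac)
  also have "\<dots> = (\<Sum>k<N. \<Sum>a<N. zz * (v $ k * (S $$ (k, a) * v $ a)))"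
    by (rule sum.swap)
  also have "\<dots> = zz * (\<Sum>k<N. v $ k * (\<Sum>a<N. S $$ (k, a) * v $ a))"
    by (simp add: sum_distrib_left)
  also have "(\<Sum>k<N. v $ k * (\<Sum>a<N. S $$ (k, a) * v $ a)) = v \<bullet> (S *\<^sub>v v)"
  proof -
    have Sv: "S *\<^sub>v v \<in> carrier_vec N" using Sc v by simp
    show ?thesis unfolding vv_entry[OF v Sv] using mv_entry[OF Sc v] by simp
  qed
  finally have eq: "S \<bullet>\<^sub>F (U * transpose_mat U) = zz * (v \<bullet> (S *\<^sub>v v))" .
  have "\<exists>i<P. z $ i \<noteq> 0"
  proof (rule ccontr)
    assume "\<not> (\<exists>i<P. z $ i \<noteq> 0)"
    then have "z = 0\<^sub>v P" using z(1) by (intro eq_vecI) auto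
    then show False using z(2) by simp
  qed
  then obtain i where i: "i < P" "z $ i \<noteq> 0" by blast
  have "z $ i * z $ i \<le> zz" unfolding zz_def
    by (rule member_le_sum[of i "{..<P}" "\<lambda>s. z $ s * z $ s"]) (use i in auto)
  moreover have "z $ i * z $ i > 0" using i(2) by (metis not_real_square_gt_zero)
  ultimately have "zz > 0" by linarith
  then show "0 \<le> v \<bullet> (S *\<^sub>v v)" using ge eq by (simp add: zero_le_mult_iff)
qed

theorem lemma13:
  fixes l d m k :: nat and n p :: "nat \<Rightarrow> nat"
    and A :: "nat \<Rightarrow> nat \<Rightarrow> real mat" and a0 :: "nat \<Rightarrow> real vec"
    and Cm :: "nat \<Rightarrow> real mat" and c b :: "real vec"
    and Y Xb :: "nat \<Rightarrow> real mat" and x :: "real vec"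
  assumes k: "1 \<le> k" "k \<le> l"
    and p_pos: "\<forall>j<k. 0 < p j"
    and data: "sdp_data l n d m A a0 Cm c b"
    and nonempty: "\<exists>X x'. feasible l n d m A a0 b X x'"
    and attained: "\<exists>X x'. feasible l n d m A a0 b X x' \<and>
        (\<forall>X' x''. feasible l n d m A a0 b X' x'' \<longrightarrow> objective l Cm c X x' \<le> objective l Cm c X' x'')"
    and crit: "(\<exists>lam. crit1 l n d m k p A a0 Cm c b Y Xb x lam \<and>
                     (\<forall>j<k. psd_mat (n j) (slackS n m A Cm lam j)))
             \<or> (\<exists>lam. crit2 l n d m k p A a0 Cm c b Y Xb x lam \<and>
                     (\<forall>j<k. vec_space.rank (n j) (Y j) < p j))"
  shows "global_min_BM l n d m k p A a0 Cm c b Y Xb x"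
proof -
  obtain lam where c1: "crit1 l n d m k p A a0 Cm c b Y Xb x lam"
    and psdk: "\<forall>j<k. psd_mat (n j) (slackS n m A Cm lam j)"
  proof (cases "\<exists>lam. crit1 l n d m k p A a0 Cm c b Y Xb x lam \<and>
                     (\<forall>j<k. psd_mat (n j) (slackS n m A Cm lam j))")
    case True
    then show ?thesis using that by blast
  next
    case False
    then obtain lam where c2: "crit2 l n d m k p A a0 Cm c b Y Xb x lam"
      and rk: "\<forall>j<k. vec_space.rank (n j) (Y j) < p j" using crit by blast
    have c1: "crit1 l n d m k p A a0 Cm c b Y Xb x lam" using c2 unfolding crit2_def by blast
    have "psd_mat (n j) (slackS n m A Cm lam j)" if j: "j < k" for j
    proof (rule case2_psd)
      show "sym_mat (n j) (slackS n m A Cm lam j)" using slack_sym[OF data] j k by simp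
      show "Y j \<in> carrier_mat (n j) (p j)" using c1 j unfolding crit1_def feasibleBM_def by blast
      show "vec_space.rank (n j) (Y j) < p j" using rk j by blast
      show "\<forall>i<m. A i j \<in> carrier_mat (n j) (n j)"
        using data j k unfolding sdp_data_def sym_mat_def by auto
      show "\<forall>U\<in>carrier_mat (n j) (p j). (\<forall>i<m. A i j \<bullet>\<^sub>F (U * transpose_mat (Y j)) = 0) \<longrightarrow>
              0 \<le> slackS n m A Cm lam j \<bullet>\<^sub>F (U * transpose_mat U)"
        using c2 j unfolding crit2_def by blast
    qed
    then show ?thesis using that c1 by blast
  qed
  have lam: "lam \<in> carrier_vec m" and fBM: "feasibleBM l n d m k p A a0 b Y Xb x"
    and psdrest: "\<forall>j\<in>{k..<l}. psd_mat (n j) (slackS n m A Cm lam j)"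
    and comp: "(\<Sum>j\<in>{k..<l}. slackS n m A Cm lam j \<bullet>\<^sub>F Xb j) = 0"
    and s0: "slack_s d m a0 c lam = 0\<^sub>v d"
    and SY: "\<forall>j<k. slackS n m A Cm lam j * Y j = 0\<^sub>m (n j) (p j)"
    using c1 unfolding crit1_def by auto
  have psdall: "psd_mat (n j) (slackS n m A Cm lam j)" if "j < l" for j
    using psdk psdrest that by (cases "j < k") auto
  have feas: "feasible l n d m A a0 b (liftBM k Y Xb) x" and Yc: "\<forall>j<k. Y j \<in> carrier_mat (n j) (p j)"
    using fBM unfolding feasibleBM_def by auto
  have split: "{..<l} = {..<k} \<union> {k..<l}" using k by auto
  have "(\<Sum>j<l. slackS n m A Cm lam j \<bullet>\<^sub>F liftBM k Y Xb j)
      = (\<Sum>j<k. slackS n m A Cm lam j \<bullet>\<^sub>F liftBM k Y Xb j) + (\<Sum>j\<in>{k..<l}. slackS n m A Cm lam j \<bullet>\<^sub>F liftBM k Y Xb j)"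
    unfolding split by (rule sum.union_disjoint) auto
  also have "(\<Sum>j<k. slackS n m A Cm lam j \<bullet>\<^sub>F liftBM k Y Xb j) = 0"
  proof (rule sum.neutral, rule ballI)
    fix j assume "j \<in> {..<k}"
    then have j: "j < k" by simp
    have Ssym: "sym_mat (n j) (slackS n m A Cm lam j)" using psdk j unfolding psd_mat_def by blast
    show "slackS n m A Cm lam j \<bullet>\<^sub>F liftBM k Y Xb j = 0"
      unfolding liftBM_def using j frob_SYY[of "slackS n m A Cm lam j" "n j" "Y j" "p j"] Ssym Yc SY
      unfolding sym_mat_def by simp
  qed
  also have "(\<Sum>j\<in>{k..<l}. slackS n m A Cm lam j \<bullet>\<^sub>F liftBM k Y Xb j) = 0"
    using comp unfolding liftBM_def by simp
  finally have zero: "(\<Sum>j<l. slackS n m A Cm lam j \<bullet>\<^sub>F liftBM k Y Xb j) = 0" by simp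
  have objY: "objective l Cm c (liftBM k Y Xb) x = lam \<bullet> b"
    using obj_eq[OF data lam s0 feas] zero by simp
  show ?thesis
    unfolding global_min_BM_def
  proof (intro conjI fBM allI impI)
    fix Y' Xb' x' assume f': "feasibleBM l n d m k p A a0 b Y' Xb' x'"
    then have feas': "feasible l n d m A a0 b (liftBM k Y' Xb') x'" unfolding feasibleBM_def by auto
    have "(\<Sum>j<l. slackS n m A Cm lam j \<bullet>\<^sub>F liftBM k Y' Xb' j) \<ge> 0"
    proof (rule sum_nonneg)
      fix j assume "j \<in> {..<l}"
      then have j: "j < l" by simp
      have "psd_mat (n j) (liftBM k Y' Xb' j)" using feas' j unfolding feasible_def by blast
      then show "slackS n m A Cm lam j \<bullet>\<^sub>F liftBM k Y' Xb' j \<ge> 0" using frob_psd psdall[OF j] by blast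
    qed
    then show "objective l Cm c (liftBM k Y Xb) x \<le> objective l Cm c (liftBM k Y' Xb') x'"
      using obj_eq[OF data lam s0 feas'] objY by simp
  qed
qed

end
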